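(* Let $H$ be a Banach bialgebra and $A$ a left $H$-$\widehat\otimes$-module Arens–Michael algebra. Then the action of $H$ on $A$ is $m$-localizable, i.e., there is a defining family of continuous seminorms $\|\cdot\|$ on $A$ each of which is submultiplicative and $H$-stable.
   Context: Conventions: algebras are complex, associative, unital. $\widehat\otimes$ is the completed projective tensor product. A $\widehat\otimes$-algebra is a complete locally convex algebra with jointly continuous multiplication; a $\widehat\otimes$-bialgebra is a $\widehat\otimes$-algebra $H$ with continuous coassociative comultiplication $\Delta_H\colon H\to H\widehat\otimes H$ and counit $\varepsilon_H\colon H\to\mathbb C$ which are unital algebra homomorphisms; a Banach bialgebra is a $\widehat\otimes$-bialgebra whose underlying space is a Banach space. A left $H$-$\widehat\otimes$-module algebra is a $\widehat\otimes$-algebra $A$ with a continuous bilinear left action $H\times A\to A$ making $A$ a left $H$-module such that $h\cdot(ab)=\mu_A(\Delta_H(h)\cdot(a\otimes b))$ and $h\cdot1=\varepsilon_H(h)1$. An Arens–Michael algebra is a complete locally convex algebra whose topology is given by submultiplicative seminorms. A seminorm $\|\cdot\|$ on $A$ is $H$-stable if there is a continuous seminorm $p$ on $H$ with $\|h\cdot a\|\le p(h)\|a\|$ for all $h\in H$, $a\in A$. *)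

theory Defs
  imports "HOL-Analysis.Analysis"
begin

definition cvs :: "(complex \<Rightarrow> 'v::ab_group_add \<Rightarrow> 'v) \<Rightarrow> bool" where
  "cvs sm \<longleftrightarrow>
     (\<forall>c x y. sm c (x + y) = sm c x + sm c y) \<and>
     (\<forall>c d x. sm (c + d) x = sm c x + sm d x) \<and>
     (\<forall>c d x. sm (c * d) x = sm c (sm d x)) \<and>
     (\<forall>x. sm 1 x = x)"

definition calg :: "(complex \<Rightarrow> 'v::ring_1 \<Rightarrow> 'v) \<Rightarrow> bool" where
  "calg sm \<longleftrightarrow> cvs sm \<and>
     (\<forall>c x y. sm c (x * y) = sm c x * y) \<and>
     (\<forall>c x y. sm c (x * y) = x * sm c y)"

definition seminorm_on :: "(complex \<Rightarrow> 'v::ab_group_add \<Rightarrow> 'v) \<Rightarrow> ('v \<Rightarrow> real) \<Rightarrow> bool" where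
  "seminorm_on sm p \<longleftrightarrow>
     (\<forall>x y. p (x + y) \<le> p x + p y) \<and> (\<forall>c x. p (sm c x) = cmod c * p x)"

definition cont_sn :: "(complex \<Rightarrow> 'v::ab_group_add \<Rightarrow> 'v) \<Rightarrow> ('v \<Rightarrow> real) set \<Rightarrow> ('v \<Rightarrow> real) \<Rightarrow> bool" where
  "cont_sn sm P q \<longleftrightarrow> seminorm_on sm q \<and>
     (\<exists>F C. finite F \<and> F \<subseteq> P \<and> (\<forall>x. q x \<le> C * (\<Sum>p\<in>F. p x)))"

definition defining_family :: "(complex \<Rightarrow> 'v::ab_group_add \<Rightarrow> 'v) \<Rightarrow> ('v \<Rightarrow> real) set \<Rightarrow> ('v \<Rightarrow> real) set \<Rightarrow> bool" where
  "defining_family sm P Q \<longleftrightarrow> (\<forall>q\<in>Q. cont_sn sm P q) \<and> (\<forall>p\<in>P. cont_sn sm Q p)"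

definition lc_hausdorff :: "('v::ab_group_add \<Rightarrow> real) set \<Rightarrow> bool" where
  "lc_hausdorff P \<longleftrightarrow> (\<forall>x. x \<noteq> 0 \<longrightarrow> (\<exists>p\<in>P. p x > 0))"

definition lc_complete :: "('v::ab_group_add \<Rightarrow> real) set \<Rightarrow> bool" where
  "lc_complete P \<longleftrightarrow> (\<forall>F. F \<noteq> bot \<longrightarrow>
      (\<forall>p\<in>P. \<forall>e>0. \<forall>\<^sub>F (x, y) in F \<times>\<^sub>F F. p (x - y) < e) \<longrightarrow>
      (\<exists>s. \<forall>p\<in>P. \<forall>e>0. \<forall>\<^sub>F x in F. p (x - s) < e))"

definition lc_sums :: "('v::ab_group_add \<Rightarrow> real) set \<Rightarrow> (nat \<Rightarrow> 'v) \<Rightarrow> 'v \<Rightarrow> bool" where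
  "lc_sums P f s \<longleftrightarrow> (\<forall>p\<in>P. (\<lambda>n. p ((\<Sum>i<n. f i) - s)) \<longlonglongrightarrow> 0)"

definition cont_bilinear ::
  "(complex \<Rightarrow> 'v::ab_group_add \<Rightarrow> 'v) \<Rightarrow> ('v \<Rightarrow> real) set \<Rightarrow>
   (complex \<Rightarrow> 'w::ab_group_add \<Rightarrow> 'w) \<Rightarrow> ('w \<Rightarrow> real) set \<Rightarrow>
   (complex \<Rightarrow> 'u::ab_group_add \<Rightarrow> 'u) \<Rightarrow> ('u \<Rightarrow> real) set \<Rightarrow> ('v \<Rightarrow> 'w \<Rightarrow> 'u) \<Rightarrow> bool" where
  "cont_bilinear smV PV smW PW smU PU B \<longleftrightarrow>
     (\<forall>x x' y. B (x + x') y = B x y + B x' y) \<and>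
     (\<forall>x y y'. B x (y + y') = B x y + B x y') \<and>
     (\<forall>c x y. B (smV c x) y = smU c (B x y)) \<and>
     (\<forall>c x y. B x (smW c y) = smU c (B x y)) \<and>
     (\<forall>r\<in>PU. \<exists>p q. cont_sn smV PV p \<and> cont_sn smW PW q \<and> (\<forall>x y. r (B x y) \<le> p x * q y))"

definition am_algebra :: "(complex \<Rightarrow> 'a::ring_1 \<Rightarrow> 'a) \<Rightarrow> ('a \<Rightarrow> real) set \<Rightarrow> bool" where
  "am_algebra sm P \<longleftrightarrow> calg sm \<and> (\<forall>p\<in>P. seminorm_on sm p) \<and> lc_hausdorff P \<and> lc_complete P \<and>
     cont_bilinear sm P sm P sm P (*) \<and>
     (\<exists>Q. defining_family sm P Q \<and> (\<forall>q\<in>Q. \<forall>a b. q (a * b) \<le> q a * q b))"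

definition banach_algebra :: "(complex \<Rightarrow> 'h::ring_1 \<Rightarrow> 'h) \<Rightarrow> ('h \<Rightarrow> real) \<Rightarrow> bool" where
  "banach_algebra sm n \<longleftrightarrow> calg sm \<and> seminorm_on sm n \<and> (\<forall>x. n x = 0 \<longrightarrow> x = 0) \<and>
     lc_complete {n} \<and> (\<exists>C. \<forall>x y. n (x * y) \<le> C * n x * n y)"

definition bounded_bilinear_form :: "(complex \<Rightarrow> 'h::ab_group_add \<Rightarrow> 'h) \<Rightarrow> ('h \<Rightarrow> real) \<Rightarrow> ('h \<Rightarrow> 'h \<Rightarrow> complex) \<Rightarrow> bool" where
  "bounded_bilinear_form sm n \<phi> \<longleftrightarrow>
     (\<forall>x x' y. \<phi> (x + x') y = \<phi> x y + \<phi> x' y) \<and>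
     (\<forall>x y y'. \<phi> x (y + y') = \<phi> x y + \<phi> x y') \<and>
     (\<forall>c x y. \<phi> (sm c x) y = c * \<phi> x y) \<and>
     (\<forall>c x y. \<phi> x (sm c y) = c * \<phi> x y) \<and>
     (\<exists>K. \<forall>x y. cmod (\<phi> x y) \<le> K * n x * n y)"

definition bounded_trilinear_form :: "(complex \<Rightarrow> 'h::ab_group_add \<Rightarrow> 'h) \<Rightarrow> ('h \<Rightarrow> real) \<Rightarrow> ('h \<Rightarrow> 'h \<Rightarrow> 'h \<Rightarrow> complex) \<Rightarrow> bool" where
  "bounded_trilinear_form sm n \<psi> \<longleftrightarrow>
     (\<forall>x x' y z. \<psi> (x + x') y z = \<psi> x y z + \<psi> x' y z) \<and>
     (\<forall>x y y' z. \<psi> x (y + y') z = \<psi> x y z + \<psi> x y' z) \<and>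
     (\<forall>x y z z'. \<psi> x y (z + z') = \<psi> x y z + \<psi> x y z') \<and>
     (\<forall>c x y z. \<psi> (sm c x) y z = c * \<psi> x y z) \<and>
     (\<forall>c x y z. \<psi> x (sm c y) z = c * \<psi> x y z) \<and>
     (\<forall>c x y z. \<psi> x y (sm c z) = c * \<psi> x y z) \<and>
     (\<exists>K. \<forall>x y z. cmod (\<psi> x y z) \<le> K * n x * n y * n z)"

text \<open>An element of the completed projective tensor product of a Banach space with itself
  is represented (Grothendieck) by a series  \<Sum> x_n \<otimes> y_n  with \<Sum> \<parallel>x_n\<parallel>\<parallel>y_n\<parallel> < \<infinity>.\<close>
definition ptensor_rep :: "('h \<Rightarrow> real) \<Rightarrow> (nat \<Rightarrow> 'h \<times> 'h) \<Rightarrow> bool" where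
  "ptensor_rep n r \<longleftrightarrow> summable (\<lambda>i. n (fst (r i)) * n (snd (r i)))"

text \<open>Pairing of a bounded bilinear form (= element of the dual of H \<otimes>^ H) with a represented tensor.\<close>
definition tpair :: "('h \<Rightarrow> 'h \<Rightarrow> complex) \<Rightarrow> (nat \<Rightarrow> 'h \<times> 'h) \<Rightarrow> complex" where
  "tpair \<phi> r = (\<Sum>i. \<phi> (fst (r i)) (snd (r i)))"

text \<open>Two representations define the same element of H \<otimes>^ H (dual pairing separates points).\<close>
definition teq :: "(complex \<Rightarrow> 'h::ab_group_add \<Rightarrow> 'h) \<Rightarrow> ('h \<Rightarrow> real) \<Rightarrow> (nat \<Rightarrow> 'h \<times> 'h) \<Rightarrow> (nat \<Rightarrow> 'h \<times> 'h) \<Rightarrow> bool" where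
  "teq sm n r s \<longleftrightarrow> (\<forall>\<phi>. bounded_bilinear_form sm n \<phi> \<longrightarrow> tpair \<phi> r = tpair \<phi> s)"

text \<open>The comultiplication \<Delta> : H \<rightarrow> H \<otimes>^ H is given by choosing, for each h, a representing
  series \<Delta> h.  All identities are stated on elements of H \<otimes>^ H resp. H \<otimes>^ H \<otimes>^ H, i.e.
  tested against bounded bi-/trilinear forms (which form the duals), hence are independent
  of the chosen representatives.\<close>
definition banach_bialgebra ::
  "(complex \<Rightarrow> 'h::ring_1 \<Rightarrow> 'h) \<Rightarrow> ('h \<Rightarrow> real) \<Rightarrow> ('h \<Rightarrow> nat \<Rightarrow> 'h \<times> 'h) \<Rightarrow> ('h \<Rightarrow> complex) \<Rightarrow> bool" where
  "banach_bialgebra sm n \<Delta> \<epsilon> \<longleftrightarrow> banach_algebra sm n \<and>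
     \<comment> \<open>\<Delta> takes values in H \<otimes>^ H, is linear and continuous\<close>
     (\<forall>h. ptensor_rep n (\<Delta> h)) \<and>
     (\<forall>\<phi>. bounded_bilinear_form sm n \<phi> \<longrightarrow> (\<forall>a b h k.
        tpair \<phi> (\<Delta> (sm a h + sm b k)) = a * tpair \<phi> (\<Delta> h) + b * tpair \<phi> (\<Delta> k))) \<and>
     (\<exists>C. \<forall>h. \<exists>r. ptensor_rep n r \<and> teq sm n r (\<Delta> h) \<and>
        (\<Sum>i. n (fst (r i)) * n (snd (r i))) \<le> C * n h) \<and>
     \<comment> \<open>\<Delta> is a unital algebra homomorphism\<close>
     (\<forall>\<phi>. bounded_bilinear_form sm n \<phi> \<longrightarrow>
        tpair \<phi> (\<Delta> 1) = \<phi> 1 1 \<and>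
        (\<forall>h k. tpair \<phi> (\<Delta> (h * k)) =
           (\<Sum>i. tpair (\<lambda>a b. \<phi> (fst (\<Delta> h i) * a) (snd (\<Delta> h i) * b)) (\<Delta> k)))) \<and>
     \<comment> \<open>coassociativity  (\<Delta> \<otimes> 1)\<Delta> = (1 \<otimes> \<Delta>)\<Delta>\<close>
     (\<forall>\<psi>. bounded_trilinear_form sm n \<psi> \<longrightarrow> (\<forall>h.
        (\<Sum>i. tpair (\<lambda>a b. \<psi> a b (snd (\<Delta> h i))) (\<Delta> (fst (\<Delta> h i)))) =
        (\<Sum>i. tpair (\<lambda>b c. \<psi> (fst (\<Delta> h i)) b c) (\<Delta> (snd (\<Delta> h i)))))) \<and>
     \<comment> \<open>\<epsilon> is a continuous unital algebra homomorphism\<close>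
     (\<forall>a b h k. \<epsilon> (sm a h + sm b k) = a * \<epsilon> h + b * \<epsilon> k) \<and>
     (\<exists>C. \<forall>h. cmod (\<epsilon> h) \<le> C * n h) \<and>
     \<epsilon> 1 = 1 \<and> (\<forall>h k. \<epsilon> (h * k) = \<epsilon> h * \<epsilon> k) \<and>
     \<comment> \<open>counit laws  (\<epsilon> \<otimes> 1)\<Delta> = id = (1 \<otimes> \<epsilon>)\<Delta>\<close>
     (\<forall>h. lc_sums {n} (\<lambda>i. sm (\<epsilon> (fst (\<Delta> h i))) (snd (\<Delta> h i))) h) \<and>
     (\<forall>h. lc_sums {n} (\<lambda>i. sm (\<epsilon> (snd (\<Delta> h i))) (fst (\<Delta> h i))) h)"

definition module_algebra ::
  "(complex \<Rightarrow> 'h::ring_1 \<Rightarrow> 'h) \<Rightarrow> ('h \<Rightarrow> real) \<Rightarrow> ('h \<Rightarrow> nat \<Rightarrow> 'h \<times> 'h) \<Rightarrow> ('h \<Rightarrow> complex) \<Rightarrow>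
   (complex \<Rightarrow> 'a::ring_1 \<Rightarrow> 'a) \<Rightarrow> ('a \<Rightarrow> real) set \<Rightarrow> ('h \<Rightarrow> 'a \<Rightarrow> 'a) \<Rightarrow> bool" where
  "module_algebra smH n \<Delta> \<epsilon> smA P act \<longleftrightarrow>
     cont_bilinear smH {n} smA P smA P act \<and>
     (\<forall>h k a. act (h * k) a = act h (act k a)) \<and> (\<forall>a. act 1 a = a) \<and>
     (\<forall>h a b. lc_sums P (\<lambda>i. act (fst (\<Delta> h i)) a * act (snd (\<Delta> h i)) b) (act h (a * b))) \<and>
     (\<forall>h. act h 1 = smA (\<epsilon> h) 1)"

end

theory Submission
  imports Defs
begin

context
  fixes sm :: "complex \<Rightarrow> 'v::ab_group_add \<Rightarrow> 'v"
  assumes cvs: "cvs sm"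
begin

lemma cvs_add: "sm c (x + y) = sm c x + sm c y" using cvs unfolding cvs_def by blast
lemma cvs_add2: "sm (c + d) x = sm c x + sm d x" using cvs unfolding cvs_def by blast
lemma cvs_mult: "sm (c * d) x = sm c (sm d x)" using cvs unfolding cvs_def by blast
lemma cvs_one: "sm 1 x = x" using cvs unfolding cvs_def by blast

lemma cvs_zero1: "sm 0 x = 0"
proof -
  have "sm (0 + 0) x = sm 0 x + sm 0 x" by (rule cvs_add2)
  then show ?thesis by simp
qed

lemma cvs_zero2: "sm c 0 = 0"
proof -
  have "sm c (0 + 0) = sm c 0 + sm c 0" by (rule cvs_add)
  then show ?thesis by simp
qed

lemma cvs_neg: "sm c (- x) = - sm c x"
proof -
  have "sm c (x + - x) = sm c x + sm c (- x)" by (rule cvs_add)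
  then have "0 = sm c x + sm c (- x)" by (simp add: cvs_zero2)
  then show ?thesis by (simp add: eq_neg_iff_add_eq_0 add.commute)
qed

lemma cvs_diff: "sm c (x - y) = sm c x - sm c y"
  using cvs_add[of c x "- y"] by (simp add: cvs_neg)

lemma cvs_negs: "sm (- c) x = - sm c x"
proof -
  have "sm (c + - c) x = sm c x + sm (- c) x" by (rule cvs_add2)
  then have "0 = sm c x + sm (- c) x" by (simp add: cvs_zero1)
  then show ?thesis by (simp add: eq_neg_iff_add_eq_0 add.commute)
qed

lemma cvs_minus1: "sm (- 1) x = - x"
  by (simp add: cvs_negs cvs_one)

lemma cvs_sum: "sm c (\<Sum>i\<in>I. f i) = (\<Sum>i\<in>I. sm c (f i))"
  by (induction I rule: infinite_finite_induct) (auto simp: cvs_zero2 cvs_add)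

context
  fixes p :: "'v \<Rightarrow> real"
  assumes sn: "seminorm_on sm p"
begin

lemma sn_tri: "p (x + y) \<le> p x + p y" using sn unfolding seminorm_on_def by blast
lemma sn_hom: "p (sm c x) = cmod c * p x" using sn unfolding seminorm_on_def by blast
lemma sn_zero: "p 0 = 0" using sn_hom[of 0 0] by (simp add: cvs_zero1)
lemma sn_neg: "p (- x) = p x" using sn_hom[of "-1" x] by (simp add: cvs_minus1)
lemma sn_nonneg: "p x \<ge> 0"
proof -
  have "p (x + - x) \<le> p x + p (- x)" by (rule sn_tri)
  then show ?thesis by (simp add: sn_zero sn_neg)
qed
lemma sn_diff: "p (x - y) \<le> p x + p y"
  using sn_tri[of x "- y"] by (simp add: sn_neg)
lemma sn_diff2: "p x - p y \<le> p (x - y)"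
  using sn_tri[of "x - y" y] by simp
lemma sn_sum: "finite I \<Longrightarrow> p (\<Sum>i\<in>I. f i) \<le> (\<Sum>i\<in>I. p (f i))"
  by (induction I rule: finite_induct) (auto simp: sn_zero intro: order_trans[OF sn_tri])

end

definition hb_cand :: "(complex \<Rightarrow> 'v \<Rightarrow> 'v) \<Rightarrow> ('v \<Rightarrow> real) \<Rightarrow> 'v \<Rightarrow> ('v \<times> real) set \<Rightarrow> bool" where
 "hb_cand sm' q v G \<longleftrightarrow> (\<forall>x y z. (x,y)\<in>G \<longrightarrow> (x,z)\<in>G \<longrightarrow> y = z) \<and>
   (\<forall>x y x' y'. (x,y)\<in>G \<longrightarrow> (x',y')\<in>G \<longrightarrow> (x+x',y+y')\<in>G) \<and>
   (\<forall>x y t. (x,y)\<in>G \<longrightarrow> (sm' (of_real t) x, t*y)\<in>G) \<and>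
   (\<forall>x y. (x,y)\<in>G \<longrightarrow> y \<le> q x) \<and> (v, q v) \<in> G"

lemma smR_mult: "sm (of_real a) (sm (of_real b) x) = sm (of_real (a*b)) x"
  by (simp add: cvs_mult)

lemma smR_diff: "sm (of_real a) x - sm (of_real b) x = sm (of_real (a - b)) x"
  using cvs_add2[of "of_real a" "- of_real b" x] by (simp add: cvs_negs)

context
  fixes q :: "'v \<Rightarrow> real" and v :: 'v
  assumes snq: "seminorm_on sm q"
begin

lemma hb_base: "hb_cand sm q v {(sm (of_real t) v, t * q v) | t. True}"
proof -
  have hfun: "a * q v = b * q v" if "sm (of_real a) v = sm (of_real b) v" for a b
  proof (cases "a = b")
    case False
    have "sm (of_real (a - b)) v = 0" using that smR_diff[of a v b] by simp
    then have "\<bar>a - b\<bar> * q v = 0" using sn_hom[OF snq, of "of_real (a-b)" v] sn_zero[OF snq] by simp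
    then have "q v = 0" using False by simp
    then show ?thesis by simp
  qed simp
  have bnd: "t * q v \<le> q (sm (of_real t) v)" for t
    using sn_hom[OF snq, of "of_real t" v] sn_nonneg[OF snq, of v]
    by (simp add: mult_right_mono)
  show ?thesis unfolding hb_cand_def
  proof (intro conjI allI impI)
    show "(v, q v) \<in> {(sm (of_real t) v, t * q v) | t. True}"
      by (rule CollectI, rule exI[of _ 1]) (simp add: cvs_one)
  next
    fix x y x' y' assume "(x,y) \<in> {(sm (of_real t) v, t * q v) | t. True}"
      "(x',y') \<in> {(sm (of_real t) v, t * q v) | t. True}"
    then obtain a b where "x = sm (of_real a) v" "y = a * q v" "x' = sm (of_real b) v" "y' = b * q v" by blast
    then show "(x+x',y+y') \<in> {(sm (of_real t) v, t * q v) | t. True}"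
      by (intro CollectI exI[of _ "a+b"]) (simp add: cvs_add2[symmetric] distrib_right)
  next
    fix x y t assume "(x,y) \<in> {(sm (of_real t) v, t * q v) | t. True}"
    then obtain a where "x = sm (of_real a) v" "y = a * q v" by blast
    then show "(sm (of_real t) x, t*y) \<in> {(sm (of_real t) v, t * q v) | t. True}"
      by (intro CollectI exI[of _ "t*a"]) (simp add: smR_mult)
  next
    fix x y assume "(x,y) \<in> {(sm (of_real t) v, t * q v) | t. True}"
    then show "y \<le> q x" using bnd by blast
  next
    fix x y z assume "(x,y) \<in> {(sm (of_real t) v, t * q v) | t. True}"
      "(x,z) \<in> {(sm (of_real t) v, t * q v) | t. True}"
    then show "y = z" using hfun by blast
  qed
qed


lemma hb_zero_in: "hb_cand sm q v G \<Longrightarrow> (0, 0) \<in> G"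
proof -
  assume G: "hb_cand sm q v G"
  then have "(v, q v) \<in> G" "\<And>x y t. (x,y)\<in>G \<Longrightarrow> (sm (of_real t) x, t*y)\<in>G"
    unfolding hb_cand_def by blast+
  then have "(sm (of_real 0) v, 0 * q v) \<in> G" by blast
  then show ?thesis by (simp add: cvs_zero1)
qed

lemma hb_neg_in: "hb_cand sm q v G \<Longrightarrow> (x,y) \<in> G \<Longrightarrow> (- x, - y) \<in> G"
proof -
  assume G: "hb_cand sm q v G" "(x,y) \<in> G"
  then have "\<And>x y t. (x,y)\<in>G \<Longrightarrow> (sm (of_real t) x, t*y)\<in>G"
    unfolding hb_cand_def by blast+
  then have "(sm (of_real (-1)) x, (-1) * y) \<in> G" using G(2) by blast
  then show ?thesis using cvs_minus1 by simp
qed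

lemma hb_diff_in: "hb_cand sm q v G \<Longrightarrow> (x,y) \<in> G \<Longrightarrow> (x',y') \<in> G \<Longrightarrow> (x - x', y - y') \<in> G"
proof -
  assume G: "hb_cand sm q v G" "(x,y) \<in> G" "(x',y') \<in> G"
  then have "\<And>x y x' y'. (x,y)\<in>G \<Longrightarrow> (x',y')\<in>G \<Longrightarrow> (x+x',y+y')\<in>G"
    unfolding hb_cand_def by blast+
  from this[OF G(2) hb_neg_in[OF G(1,3)]] show ?thesis by simp
qed

lemma hb_extend:
  assumes G: "hb_cand sm q v G" and x0: "x0 \<notin> fst ` G"
  shows "\<exists>G'. hb_cand sm q v G' \<and> G \<subset> G'"
proof -
  note GD = G[unfolded hb_cand_def]
  have Gfun: "\<And>x y z. (x,y)\<in>G \<Longrightarrow> (x,z)\<in>G \<Longrightarrow> y = z" using GD by blast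
  have Gadd: "\<And>x y x' y'. (x,y)\<in>G \<Longrightarrow> (x',y')\<in>G \<Longrightarrow> (x+x',y+y')\<in>G" using GD by blast
  have Gsc: "\<And>x y t. (x,y)\<in>G \<Longrightarrow> (sm (of_real t) x, t*y)\<in>G" using GD by blast
  have Gbnd: "\<And>x y. (x,y)\<in>G \<Longrightarrow> y \<le> q x" using GD by blast
  have Gv: "(v, q v) \<in> G" using GD by blast
  define S where "S = {y - q (x - x0) | x y. (x,y)\<in>G}"
  have Sne: "S \<noteq> {}" using Gv unfolding S_def by blast
  have Sub: "s \<le> q (z + x0) - w" if "s \<in> S" "(z,w) \<in> G" for s z w
  proof -
    obtain x y where xy: "(x,y)\<in>G" "s = y - q (x - x0)" using \<open>s\<in>S\<close> unfolding S_def by blast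
    have "(x + z, y + w) \<in> G" using Gadd xy that by blast
    then have "y + w \<le> q (x + z)" using Gbnd by blast
    also have "x + z = (x - x0) + (z + x0)" by simp
    also have "q \<dots> \<le> q (x - x0) + q (z + x0)" by (rule sn_tri[OF snq])
    finally show ?thesis using xy by simp
  qed
  have bdd: "bdd_above S" using Sub Gv unfolding bdd_above_def by blast
  define c where "c = Sup S"
  have c1: "y - q (x - x0) \<le> c" if "(x,y)\<in>G" for x y
    unfolding c_def using bdd that by (intro cSup_upper) (auto simp: S_def)
  have c2: "c \<le> q (z + x0) - w" if "(z,w)\<in>G" for z w
    unfolding c_def using Sne Sub that by (intro cSup_least) auto
  define G' where "G' = {(x + sm (of_real t) x0, y + t * c) | x y t. (x,y)\<in>G}"
  have sub: "G \<subseteq> G'"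
  proof
    fix p assume "p \<in> G"
    moreover obtain a b where "p = (a,b)" by (cases p)
    ultimately show "p \<in> G'" unfolding G'_def
      by (intro CollectI exI[of _ a] exI[of _ b] exI[of _ "0::real"]) (simp add: cvs_zero1)
  qed
  have new: "(x0, c) \<in> G'" unfolding G'_def using hb_zero_in[OF G]
    by (intro CollectI exI[of _ 0] exI[of _ "0::real"] exI[of _ "1::real"]) (simp add: cvs_one)
  have notold: "(x0, c) \<notin> G" using x0 by (metis fst_conv image_eqI)
  have hfun: "y1 = y2" if h1: "(z, y1) \<in> G'" and h2: "(z, y2) \<in> G'" for z y1 y2
  proof -
    obtain x y t where a: "(x,y)\<in>G" "z = x + sm (of_real t) x0" "y1 = y + t * c"
      using h1 unfolding G'_def by blast
    obtain x' y' t' where b: "(x',y')\<in>G" "z = x' + sm (of_real t') x0" "y2 = y' + t' * c"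
      using h2 unfolding G'_def by blast
    have d: "(x - x', y - y') \<in> G" by (rule hb_diff_in[OF G a(1) b(1)])
    have e: "x - x' = sm (of_real t') x0 - sm (of_real t) x0" using a(2) b(2)
      by (simp add: algebra_simps)
    show ?thesis
    proof (cases "t = t'")
      case True
      then have "x = x'" using a(2) b(2) by simp
      then show ?thesis using a b True Gfun by blast
    next
      case False
      have "x - x' = sm (of_real (t' - t)) x0" using e smR_diff by simp
      moreover have "sm (of_real (1/(t'-t))) (sm (of_real (t' - t)) x0) = sm (of_real (1/(t'-t) * (t'-t))) x0"
        by (rule smR_mult)
      moreover have "(1/(t'-t) * (t'-t)) = 1" using False by simp
      ultimately have "sm (of_real (1/(t'-t))) (x - x') = x0"
        by (simp add: cvs_one)
      then have "(x0, (1/(t'-t)) * (y - y')) \<in> G" using Gsc[OF d, of "1/(t'-t)"] by simp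
      then show ?thesis using x0 by (metis fst_conv image_eqI)
    qed
  qed
  have cand: "hb_cand sm q v G'" unfolding hb_cand_def
  proof (intro conjI allI impI)
    fix x y z assume "(x,y)\<in>G'" "(x,z)\<in>G'" then show "y = z" by (rule hfun)
  next
    fix z1 y1 z2 y2 assume "(z1,y1)\<in>G'" "(z2,y2)\<in>G'"
    then obtain x y t x' y' t' where a: "(x,y)\<in>G" "z1 = x + sm (of_real t) x0" "y1 = y + t * c"
      and b: "(x',y')\<in>G" "z2 = x' + sm (of_real t') x0" "y2 = y' + t' * c"
      unfolding G'_def by blast
    have "(x + x', y + y') \<in> G" using a b Gadd by blast
    moreover have "z1 + z2 = (x + x') + sm (of_real (t + t')) x0"
      using a b by (simp add: cvs_add2 algebra_simps)
    moreover have "y1 + y2 = (y + y') + (t + t') * c" using a b by (simp add: algebra_simps)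
    ultimately show "(z1 + z2, y1 + y2) \<in> G'" unfolding G'_def by blast
  next
    fix z1 y1 s assume "(z1,y1)\<in>G'"
    then obtain x y t where a: "(x,y)\<in>G" "z1 = x + sm (of_real t) x0" "y1 = y + t * c"
      unfolding G'_def by blast
    have "(sm (of_real s) x, s * y) \<in> G" using a Gsc by blast
    moreover have "sm (of_real s) z1 = sm (of_real s) x + sm (of_real (s * t)) x0"
      using a by (simp add: cvs_add smR_mult)
    moreover have "s * y1 = s * y + (s * t) * c" using a by (simp add: algebra_simps)
    ultimately show "(sm (of_real s) z1, s * y1) \<in> G'" unfolding G'_def by blast
  next
    fix z1 y1 assume "(z1,y1)\<in>G'"
    then obtain x y t where a: "(x,y)\<in>G" "z1 = x + sm (of_real t) x0" "y1 = y + t * c"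
      unfolding G'_def by blast
    show "y1 \<le> q z1"
    proof (cases t "0::real" rule: linorder_cases)
      case equal then show ?thesis using a Gbnd by (simp add: cvs_zero1)
    next
      case greater
      have in1: "(sm (of_real (1/t)) x, (1/t) * y) \<in> G" using a Gsc by blast
      have "c \<le> q (sm (of_real (1/t)) x + x0) - (1/t) * y" by (rule c2[OF in1])
      then have "t * c \<le> t * q (sm (of_real (1/t)) x + x0) - y"
        using greater by (simp add: field_simps)
      also have "t * q (sm (of_real (1/t)) x + x0) = q (sm (of_real t) (sm (of_real (1/t)) x + x0))"
        using greater sn_hom[OF snq] by simp
      also have "sm (of_real t) (sm (of_real (1/t)) x + x0) = z1"
        using a greater by (simp add: cvs_add cvs_mult[symmetric] cvs_one)
      finally show ?thesis using a by simp
    next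
      case less
      define s where "s = - t"
      have s: "s > 0" using less s_def by simp
      have in1: "(sm (of_real (1/s)) x, (1/s) * y) \<in> G" using a Gsc by blast
      have "(1/s) * y - q (sm (of_real (1/s)) x - x0) \<le> c" by (rule c1[OF in1])
      then have "y - s * q (sm (of_real (1/s)) x - x0) \<le> s * c"
        using s by (simp add: field_simps)
      also have "s * q (sm (of_real (1/s)) x - x0) = q (sm (of_real s) (sm (of_real (1/s)) x - x0))"
        using s sn_hom[OF snq] by simp
      also have "sm (of_real s) (sm (of_real (1/s)) x - x0) = z1"
        using a s by (simp add: cvs_diff cvs_mult[symmetric] cvs_one s_def cvs_negs cvs_neg)
      finally show ?thesis using a s_def by simp
    qed
  next
    show "(v, q v) \<in> G'" using sub Gv by blast
  qed
  show ?thesis using cand sub new notold by blast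
qed


lemma hb_real:
  "\<exists>g. (\<forall>x y. g (x + y) = g x + g y) \<and> (\<forall>t x. g (sm (of_real t) x) = t * g x) \<and>
       (\<forall>x. g x \<le> q x) \<and> g v = q v"
proof -
  define A where "A = {G. hb_cand sm q v G}"
  have "\<forall>C\<in>chains A. \<exists>U\<in>A. \<forall>X\<in>C. X \<subseteq> U"
  proof
    fix C assume C: "C \<in> chains A"
    show "\<exists>U\<in>A. \<forall>X\<in>C. X \<subseteq> U"
    proof (cases "C = {}")
      case True then show ?thesis using hb_base unfolding A_def by blast
    next
      case False
      have CA: "\<And>X. X \<in> C \<Longrightarrow> hb_cand sm q v X" using C unfolding chains_def A_def by blast
      have ch: "\<And>X Y. X \<in> C \<Longrightarrow> Y \<in> C \<Longrightarrow> X \<subseteq> Y \<or> Y \<subseteq> X"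
        using C unfolding chains_def chain_subset_def by blast
      have two: "\<exists>X\<in>C. a \<in> X \<and> b \<in> X" if "a \<in> \<Union>C" "b \<in> \<Union>C" for a b
        using that ch by blast
      have "hb_cand sm q v (\<Union>C)" unfolding hb_cand_def
      proof (intro conjI allI impI)
        fix x y z assume "(x,y) \<in> \<Union>C" "(x,z) \<in> \<Union>C"
        then obtain X where "X\<in>C" "(x,y)\<in>X" "(x,z)\<in>X" using two by blast
        then show "y = z" using CA unfolding hb_cand_def by blast
      next
        fix x y x' y' assume "(x,y) \<in> \<Union>C" "(x',y') \<in> \<Union>C"
        then obtain X where "X\<in>C" "(x,y)\<in>X" "(x',y')\<in>X" using two by blast
        then show "(x+x',y+y') \<in> \<Union>C" using CA unfolding hb_cand_def by blast
      next
        fix x y t assume "(x,y) \<in> \<Union>C"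
        then obtain X where "X\<in>C" "(x,y)\<in>X" by blast
        then show "(sm (of_real t) x, t*y) \<in> \<Union>C" using CA unfolding hb_cand_def by blast
      next
        fix x y assume "(x,y) \<in> \<Union>C"
        then obtain X where "X\<in>C" "(x,y)\<in>X" by blast
        then show "y \<le> q x" using CA unfolding hb_cand_def by blast
      next
        obtain X where "X \<in> C" using False by blast
        then show "(v, q v) \<in> \<Union>C" using CA unfolding hb_cand_def by blast
      qed
      then show ?thesis unfolding A_def by blast
    qed
  qed
  from Zorn_Lemma2[OF this] obtain M where M: "M \<in> A" and max: "\<And>X. X \<in> A \<Longrightarrow> M \<subseteq> X \<Longrightarrow> X = M"
    by blast
  have MC: "hb_cand sm q v M" using M unfolding A_def by blast
  have dom: "x \<in> fst ` M" for x
  proof (rule ccontr)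
    assume "x \<notin> fst ` M"
    from hb_extend[OF MC this] obtain G' where G': "hb_cand sm q v G'" and MG: "M \<subset> G'" by blast
    have GA: "G' \<in> A" unfolding A_def using G' by simp
    have "G' = M" by (rule max[OF GA psubset_imp_subset[OF MG]])
    with MG show False by simp
  qed
  note MD = MC[unfolded hb_cand_def]
  have Mfun: "\<And>x y z. (x,y)\<in>M \<Longrightarrow> (x,z)\<in>M \<Longrightarrow> y = z" using MD by blast
  have Madd: "\<And>x y x' y'. (x,y)\<in>M \<Longrightarrow> (x',y')\<in>M \<Longrightarrow> (x+x',y+y')\<in>M" using MD by blast
  have Msc: "\<And>x y t. (x,y)\<in>M \<Longrightarrow> (sm (of_real t) x, t*y)\<in>M" using MD by blast
  have Mbnd: "\<And>x y. (x,y)\<in>M \<Longrightarrow> y \<le> q x" using MD by blast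
  have Mv: "(v, q v) \<in> M" using MD by blast
  define g where "g x = (THE y. (x,y) \<in> M)" for x
  have gin: "(x, g x) \<in> M" for x
  proof -
    obtain y where xy: "(x,y) \<in> M" using dom[of x] by (auto simp: image_iff)
    show ?thesis unfolding g_def
    proof (rule theI[of _ y])
      show "(x,y) \<in> M" by (rule xy)
    next
      fix z assume "(x,z) \<in> M" then show "z = y" using xy by (rule Mfun)
    qed
  qed
  have geq: "(x,y) \<in> M \<Longrightarrow> g x = y" for x y using gin[of x] by (rule Mfun)
  show ?thesis
  proof (intro exI[of _ g] conjI allI)
    fix x y show "g (x + y) = g x + g y" by (rule geq, rule Madd, rule gin, rule gin)
  next
    fix t x show "g (sm (of_real t) x) = t * g x" by (rule geq, rule Msc, rule gin)
  next
    fix x show "g x \<le> q x" by (rule Mbnd, rule gin)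
  next
    show "g v = q v" by (rule geq, rule Mv)
  qed
qed

lemma hahn_banach_c:
  "\<exists>f::'v \<Rightarrow> complex. (\<forall>x y. f (x + y) = f x + f y) \<and> (\<forall>c x. f (sm c x) = c * f x) \<and>
       (\<forall>x. cmod (f x) \<le> q x) \<and> f v = of_real (q v)"
proof -
  obtain g where gadd: "\<And>x y. g (x + y) = g x + g y" and gsc: "\<And>t x. g (sm (of_real t) x) = t * g x"
    and gq: "\<And>x. g x \<le> q x" and gv: "g v = q v" using hb_real by blast
  define f where "f x = Complex (g x) (- g (sm \<i> x))" for x
  have fadd: "f (x + y) = f x + f y" for x y unfolding f_def by (simp add: gadd cvs_add complex_eq_iff)
  have gc: "g (sm c x) = Re c * g x + Im c * g (sm \<i> x)" for c x
  proof -
    have "c = of_real (Re c) + of_real (Im c) * \<i>" by (simp add: complex_eq_iff)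
    then have "sm c x = sm (of_real (Re c) + of_real (Im c) * \<i>) x"
      by (rule arg_cong[where f="\<lambda>c. sm c x"])
    also have "\<dots> = sm (of_real (Re c)) x + sm (of_real (Im c) * \<i>) x" by (rule cvs_add2)
    also have "sm (of_real (Im c) * \<i>) x = sm (of_real (Im c)) (sm \<i> x)" by (rule cvs_mult)
    finally have "sm c x = sm (of_real (Re c)) x + sm (of_real (Im c)) (sm \<i> x)" .
    then show ?thesis by (simp add: gadd gsc)
  qed
  have fsc: "f (sm c x) = c * f x" for c x
  proof -
    have "sm \<i> (sm c x) = sm (\<i> * c) x" by (simp add: cvs_mult)
    moreover have "g (sm (\<i> * c) x) = Re (\<i> * c) * g x + Im (\<i> * c) * g (sm \<i> x)" by (rule gc)
    ultimately have e2: "g (sm \<i> (sm c x)) = - Im c * g x + Re c * g (sm \<i> x)" by simp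
    have e1: "g (sm c x) = Re c * g x + Im c * g (sm \<i> x)" by (rule gc)
    show ?thesis unfolding f_def e1 e2 by (simp add: complex_eq_iff algebra_simps)
  qed
  have gneg: "- g x \<le> q x" for x
  proof -
    have "g (sm (of_real (-1)) x) = (-1) * g x" by (rule gsc)
    then have "g (sm (of_real (-1)) x) = - g x" by simp
    then have "- g x = g (- x)" by (simp add: cvs_minus1)
    also have "\<dots> \<le> q (- x)" by (rule gq)
    finally show ?thesis by (simp add: sn_neg[OF snq])
  qed
  have fb: "cmod (f x) \<le> q x" for x
  proof (cases "f x = 0")
    case True then show ?thesis using sn_nonneg[OF snq] by simp
  next
    case False
    define u where "u = cnj (f x) / of_real (cmod (f x))"
    have u1: "cmod u = 1" using False unfolding u_def by (simp add: norm_divide)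
    have "f (sm u x) = u * f x" by (rule fsc)
    also have "u * f x = of_real (cmod (f x))"
    proof -
      have "u * f x = (f x * cnj (f x)) / of_real (cmod (f x))" unfolding u_def by (simp add: field_simps)
      also have "f x * cnj (f x) = of_real ((cmod (f x))^2)" by (rule complex_norm_square[symmetric])
      finally show ?thesis using False by (simp add: power2_eq_square)
    qed
    finally have "Re (f (sm u x)) = cmod (f x)" by simp
    then have "cmod (f x) = g (sm u x)" unfolding f_def by simp
    also have "\<dots> \<le> q (sm u x)" by (rule gq)
    also have "\<dots> = q x" using sn_hom[OF snq] u1 by simp
    finally show ?thesis .
  qed
  have fv: "f v = of_real (q v)"
  proof -
    have re: "Re (f v) = q v" unfolding f_def by (simp add: gv)
    have "cmod (f v) \<le> q v" by (rule fb)
    then have "(cmod (f v))^2 \<le> (q v)^2"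
      by (rule power_mono) simp
    then have "(Re (f v))^2 + (Im (f v))^2 \<le> (q v)^2"
      by (simp only: cmod_power2)
    then have "Im (f v) = 0" using re by simp
    then show ?thesis using re by (simp add: complex_eq_iff)
  qed
  show ?thesis using fadd fsc fb fv by blast
qed

end
end

lemma sn_set_nonneg: "cvs sm \<Longrightarrow> \<forall>p\<in>P. seminorm_on sm p \<Longrightarrow> F \<subseteq> P \<Longrightarrow> 0 \<le> (\<Sum>p\<in>F. p x)"
  by (intro sum_nonneg) (auto intro: sn_nonneg)

lemma cont_sn_nn:
  assumes cvs: "cvs sm" and PS: "\<forall>p\<in>P. seminorm_on sm p" and q: "cont_sn sm P q"
  shows "\<exists>F C. finite F \<and> F \<subseteq> P \<and> C \<ge> 0 \<and> (\<forall>x. q x \<le> C * (\<Sum>p\<in>F. p x))"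
proof -
  obtain F C where F: "finite F" "F \<subseteq> P" and b: "\<And>x. q x \<le> C * (\<Sum>p\<in>F. p x)"
    using q unfolding cont_sn_def by blast
  have "q x \<le> max C 0 * (\<Sum>p\<in>F. p x)" for x
    using b[of x] sn_set_nonneg[OF cvs PS F(2), of x]
    by (smt (verit) mult_right_mono max.cobounded1)
  then show ?thesis using F by (intro exI[of _ F] exI[of _ "max C 0"]) auto
qed

lemma cont_sn_dom:
  assumes cvs: "cvs sm" and PS: "\<forall>p\<in>P. seminorm_on sm p" and s: "cont_sn sm P s"
    and N: "seminorm_on sm N" and K: "K \<ge> 0" and le: "\<And>x. N x \<le> K * s x"
  shows "cont_sn sm P N"
proof -
  obtain F C where F: "finite F" "F \<subseteq> P" "C \<ge> 0" and b: "\<And>x. s x \<le> C * (\<Sum>p\<in>F. p x)"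
    using cont_sn_nn[OF cvs PS s] by blast
  have "N x \<le> (K * C) * (\<Sum>p\<in>F. p x)" for x
    using le[of x] mult_left_mono[OF b[of x] K] by (simp add: mult.assoc)
  then show ?thesis unfolding cont_sn_def using N F by blast
qed

lemma seminorm_add:
  assumes cvs: "cvs sm" and "seminorm_on sm a" "seminorm_on sm b"
  shows "seminorm_on sm (\<lambda>x. a x + b x)"
  using assms unfolding seminorm_on_def
  by (smt (verit, best) distrib_left)

lemma seminorm_zero: "seminorm_on sm (\<lambda>x. 0)"
  unfolding seminorm_on_def by simp

lemma cont_sn_add:
  assumes cvs: "cvs sm" and PS: "\<forall>p\<in>P. seminorm_on sm p" and a: "cont_sn sm P a" and b: "cont_sn sm P b"
  shows "cont_sn sm P (\<lambda>x. a x + b x)"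
proof -
  obtain F C where F: "finite F" "F \<subseteq> P" "C \<ge> 0" and bF: "\<And>x. a x \<le> C * (\<Sum>p\<in>F. p x)"
    using cont_sn_nn[OF cvs PS a] by blast
  obtain G D where G: "finite G" "G \<subseteq> P" "D \<ge> 0" and bG: "\<And>x. b x \<le> D * (\<Sum>p\<in>G. p x)"
    using cont_sn_nn[OF cvs PS b] by blast
  have sF: "(\<Sum>p\<in>F. p x) \<le> (\<Sum>p\<in>F \<union> G. p x)" for x
    using F G PS by (intro sum_mono2) (auto intro: sn_nonneg[OF cvs])
  have sG: "(\<Sum>p\<in>G. p x) \<le> (\<Sum>p\<in>F \<union> G. p x)" for x
    using F G PS by (intro sum_mono2) (auto intro: sn_nonneg[OF cvs])
  have "a x + b x \<le> (C + D) * (\<Sum>p\<in>F \<union> G. p x)" for x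
    using bF[of x] bG[of x] mult_left_mono[OF sF[of x] F(3)] mult_left_mono[OF sG[of x] G(3)]
    by (simp add: distrib_right)
  moreover have "seminorm_on sm (\<lambda>x. a x + b x)"
    using a b cvs unfolding cont_sn_def by (intro seminorm_add) auto
  ultimately show ?thesis unfolding cont_sn_def using F G by (intro conjI exI[of _ "F \<union> G"] exI[of _ "C + D"]) auto
qed

lemma cont_sn_sum:
  assumes cvs: "cvs sm" and PS: "\<forall>p\<in>P. seminorm_on sm p" and I: "finite I"
    and s: "\<And>i. i \<in> I \<Longrightarrow> cont_sn sm P (s i)"
  shows "cont_sn sm P (\<lambda>x. \<Sum>i\<in>I. s i x)"
  using I s
proof (induction I rule: finite_induct)
  case empty
  then show ?case unfolding cont_sn_def using seminorm_zero
    by (intro conjI exI[of _ "{}"] exI[of _ "0::real"]) auto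
next
  case (insert i I)
  have "cont_sn sm P (\<lambda>x. s i x + (\<Sum>i\<in>I. s i x))"
    using insert by (intro cont_sn_add[OF cvs PS]) auto
  then show ?case using insert by simp
qed

lemma cont_sn_single:
  assumes cvs: "cvs sm" and sn: "seminorm_on sm n" and p: "cont_sn sm {n} p"
  shows "\<exists>C\<ge>0. \<forall>h. p h \<le> C * n h"
proof -
  obtain F C where F: "finite F" "F \<subseteq> {n}" "C \<ge> 0" and b: "\<And>x. p x \<le> C * (\<Sum>p\<in>F. p x)"
    using cont_sn_nn[OF cvs _ p] sn by blast
  have s: "(\<Sum>p\<in>F. p x) \<le> n x" for x
  proof -
    have "F = {} \<or> F = {n}" using F(2) by (rule subset_singletonD)
    then show ?thesis using sn_nonneg[OF cvs sn, of x] by auto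
  qed
  have "p h \<le> C * n h" for h
    using b[of h] mult_left_mono[OF s[of h] F(3)] by linarith
  then show ?thesis using F(3) by blast
qed

lemma lc_sums_sn:
  assumes cvs: "cvs sm" and PS: "\<forall>p\<in>P. seminorm_on sm p" and q: "cont_sn sm P q"
    and L: "lc_sums P u v"
  shows "(\<lambda>n. q ((\<Sum>i<n. u i) - v)) \<longlonglongrightarrow> 0"
proof -
  obtain F C where F: "finite F" "F \<subseteq> P" "C \<ge> 0" and b: "\<And>x. q x \<le> C * (\<Sum>p\<in>F. p x)"
    using cont_sn_nn[OF cvs PS q] by blast
  have "(\<lambda>n. \<Sum>p\<in>F. p ((\<Sum>i<n. u i) - v)) \<longlonglongrightarrow> (\<Sum>p\<in>F. 0)"
    using F L unfolding lc_sums_def by (intro tendsto_sum) auto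
  then have t: "(\<lambda>n. C * (\<Sum>p\<in>F. p ((\<Sum>i<n. u i) - v))) \<longlonglongrightarrow> 0"
    using tendsto_mult_right_zero by fastforce
  show ?thesis
  proof (rule Lim_null_comparison[OF _ t])
    show "\<forall>\<^sub>F n in sequentially. norm (q ((\<Sum>i<n. u i) - v)) \<le> C * (\<Sum>p\<in>F. p ((\<Sum>i<n. u i) - v))"
      using b q sn_nonneg[OF cvs] unfolding cont_sn_def by (auto intro!: always_eventually)
  qed
qed


locale ctx =
  fixes smH :: "complex \<Rightarrow> 'h::ring_1 \<Rightarrow> 'h" and nH :: "'h \<Rightarrow> real"
    and \<Delta> :: "'h \<Rightarrow> nat \<Rightarrow> 'h \<times> 'h" and \<epsilon> :: "'h \<Rightarrow> complex"
    and smA :: "complex \<Rightarrow> 'a::ring_1 \<Rightarrow> 'a" and P :: "('a \<Rightarrow> real) set"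
    and act :: "'h \<Rightarrow> 'a \<Rightarrow> 'a"
  assumes bb: "banach_bialgebra smH nH \<Delta> \<epsilon>"
    and am: "am_algebra smA P"
    and ma: "module_algebra smH nH \<Delta> \<epsilon> smA P act"
begin

lemma BA: "banach_algebra smH nH" using bb unfolding banach_bialgebra_def by blast
lemma calgH: "calg smH" using BA unfolding banach_algebra_def by blast
lemma cvsH: "cvs smH" using calgH unfolding calg_def by blast
lemma snH: "seminorm_on smH nH" using BA unfolding banach_algebra_def by blast
lemma nH_nonneg: "0 \<le> nH h" by (rule sn_nonneg[OF cvsH snH])
lemma nH_zero: "nH 0 = 0" by (rule sn_zero[OF cvsH snH])
lemma nH_pos: "h \<noteq> 0 \<Longrightarrow> 0 < nH h"
  using BA nH_nonneg[of h] unfolding banach_algebra_def by force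
lemma nH_mult: "\<exists>C\<ge>0. \<forall>x y. nH (x * y) \<le> C * nH x * nH y"
proof -
  obtain C where C: "\<And>x y. nH (x * y) \<le> C * nH x * nH y" using BA unfolding banach_algebra_def by blast
  have "nH (x * y) \<le> max C 0 * nH x * nH y" for x y
  proof -
    have "C * nH x * nH y \<le> max C 0 * nH x * nH y"
      using nH_nonneg[of x] nH_nonneg[of y] by (simp add: mult_right_mono mult.assoc)
    then show ?thesis using C[of x y] by linarith
  qed
  then show ?thesis by (intro exI[of _ "max C 0"]) auto
qed
lemma Cd_ex: "\<exists>C. \<forall>h. \<exists>r. ptensor_rep nH r \<and> teq smH nH r (\<Delta> h) \<and>
        (\<Sum>i. nH (fst (r i)) * nH (snd (r i))) \<le> C * nH h"
  using bb unfolding banach_bialgebra_def by blast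

lemma calgA: "calg smA" using am unfolding am_algebra_def by blast
lemma cvsA: "cvs smA" using calgA unfolding calg_def by blast
lemma PS: "\<forall>p\<in>P. seminorm_on smA p" using am unfolding am_algebra_def by blast
lemma smA_mult1: "smA c (x * y) = smA c x * y" using calgA unfolding calg_def by blast
lemma smA_mult2: "smA c (x * y) = x * smA c y" using calgA unfolding calg_def by blast

lemma CB: "cont_bilinear smH {nH} smA P smA P act" using ma unfolding module_algebra_def by blast
lemma act_add1: "act (x + x') y = act x y + act x' y" using CB unfolding cont_bilinear_def by blast
lemma act_add2: "act x (y + y') = act x y + act x y'" using CB unfolding cont_bilinear_def by blast
lemma act_sm1: "act (smH c x) y = smA c (act x y)" using CB unfolding cont_bilinear_def by blast
lemma act_sm2: "act x (smA c y) = smA c (act x y)" using CB unfolding cont_bilinear_def by blast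
lemma act_mult: "act (h * k) a = act h (act k a)" using ma unfolding module_algebra_def by blast
lemma act_one: "act 1 a = a" using ma unfolding module_algebra_def by blast
lemma act_sums: "lc_sums P (\<lambda>i. act (fst (\<Delta> h i)) a * act (snd (\<Delta> h i)) b) (act h (a * b))"
  using ma unfolding module_algebra_def by blast
lemma act_zero1: "act 0 y = 0"
  using act_add1[of 0 0 y] by simp

lemma act_bound1:
  assumes "p \<in> P"
  shows "\<exists>K s. K \<ge> 0 \<and> cont_sn smA P s \<and> (\<forall>h a. p (act h a) \<le> K * nH h * s a)"
proof -
  obtain ph s where ph: "cont_sn smH {nH} ph" and s: "cont_sn smA P s" and b: "\<And>x y. p (act x y) \<le> ph x * s y"
    using CB assms unfolding cont_bilinear_def by blast
  obtain C where C: "C \<ge> 0" "\<And>h. ph h \<le> C * nH h" using cont_sn_single[OF cvsH snH ph] by blast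
  have snn: "0 \<le> s y" for y using s sn_nonneg[OF cvsA] unfolding cont_sn_def by blast
  have "p (act h a) \<le> C * nH h * s a" for h a
    using b[of h a] mult_right_mono[OF C(2)[of h] snn[of a]] by linarith
  then show ?thesis using C s by blast
qed

lemma act_bound:
  assumes q: "cont_sn smA P q"
  shows "\<exists>K s. K \<ge> 0 \<and> cont_sn smA P s \<and> (\<forall>h a. q (act h a) \<le> K * nH h * s a)"
proof -
  obtain F C where F: "finite F" "F \<subseteq> P" "C \<ge> 0" and b: "\<And>x. q x \<le> C * (\<Sum>p\<in>F. p x)"
    using cont_sn_nn[OF cvsA PS q] by blast
  have "\<forall>p\<in>F. \<exists>Ks. fst Ks \<ge> 0 \<and> cont_sn smA P (snd Ks) \<and> (\<forall>h a. p (act h a) \<le> fst Ks * nH h * snd Ks a)"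
    using act_bound1 F(2) by fastforce
  then obtain Ks where Ks: "\<And>p. p \<in> F \<Longrightarrow> fst (Ks p) \<ge> 0 \<and> cont_sn smA P (snd (Ks p)) \<and>
      (\<forall>h a. p (act h a) \<le> fst (Ks p) * nH h * snd (Ks p) a)"
    by metis
  define s where "s a = (\<Sum>p\<in>F. snd (Ks p) a)" for a
  define K where "K = C * (\<Sum>p\<in>F. fst (Ks p))"
  have scont: "cont_sn smA P s" unfolding s_def
    using Ks F(1) by (intro cont_sn_sum[OF cvsA PS]) auto
  have snn: "\<And>p a. p \<in> F \<Longrightarrow> 0 \<le> snd (Ks p) a"
    using Ks sn_nonneg[OF cvsA] unfolding cont_sn_def by blast
  have Knn: "K \<ge> 0" unfolding K_def using F(3) Ks by (intro mult_nonneg_nonneg sum_nonneg) blast+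
  have "q (act h a) \<le> K * nH h * s a" for h a
  proof -
    have "q (act h a) \<le> C * (\<Sum>p\<in>F. p (act h a))" by (rule b)
    also have "(\<Sum>p\<in>F. p (act h a)) \<le> (\<Sum>p\<in>F. fst (Ks p) * nH h * s a)"
    proof (rule sum_mono)
      fix p assume p: "p \<in> F"
      have "p (act h a) \<le> fst (Ks p) * nH h * snd (Ks p) a" using Ks p by blast
      also have "snd (Ks p) a \<le> s a" unfolding s_def using snn F(1) p
        by (intro member_le_sum) auto
      then have "fst (Ks p) * nH h * snd (Ks p) a \<le> fst (Ks p) * nH h * s a"
        using Ks p nH_nonneg[of h] by (intro mult_left_mono) auto
      finally show "p (act h a) \<le> fst (Ks p) * nH h * s a" .
    qed
    also have "(\<Sum>p\<in>F. fst (Ks p) * nH h * s a) = (\<Sum>p\<in>F. fst (Ks p)) * nH h * s a"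
      by (simp add: sum_distrib_right)
    finally show ?thesis unfolding K_def using F(3)
      by (simp add: mult_left_mono mult.assoc)
  qed
  then show ?thesis using Knn scont by blast
qed


definition S :: "('a \<Rightarrow> real) \<Rightarrow> 'a \<Rightarrow> real" where
  "S q a = Sup ((\<lambda>k. q (act k a) / nH k) ` {k. k \<noteq> 0})"

lemma one_ne: "(1::'h) \<noteq> 0" by simp

lemma S_props:
  assumes q: "cont_sn smA P q"
  shows "\<exists>K s. K \<ge> 0 \<and> cont_sn smA P s \<and> (\<forall>a. S q a \<le> K * s a)"
    and "q (act k a) \<le> nH k * S q a"
    and "0 \<le> S q a"
proof -
  have snq: "seminorm_on smA q" using q unfolding cont_sn_def by blast
  obtain K s where K: "K \<ge> 0" "cont_sn smA P s" and b: "\<And>h a. q (act h a) \<le> K * nH h * s a"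
    using act_bound[OF q] by blast
  have el: "q (act k a) / nH k \<le> K * s a" if "k \<noteq> 0" for k a
  proof -
    have "0 < nH k" using nH_pos that by blast
    then show ?thesis using b[of k a] by (simp add: divide_le_eq mult.commute mult.left_commute)
  qed
  have bdd: "bdd_above ((\<lambda>k. q (act k a) / nH k) ` {k. k \<noteq> 0})" for a
    using el unfolding bdd_above_def by blast
  have ne: "((\<lambda>k. q (act k a) / nH k) ` {k. k \<noteq> 0}) \<noteq> {}" for a using one_ne by blast
  have up: "q (act k a) / nH k \<le> S q a" if "k \<noteq> 0" for k a
    unfolding S_def using bdd that by (intro cSup_upper) auto
  have "S q a \<le> K * s a" for a
    unfolding S_def using ne el by (intro cSup_least) auto
  then show "\<exists>K s. K \<ge> 0 \<and> cont_sn smA P s \<and> (\<forall>a. S q a \<le> K * s a)" using K by blast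
  show "0 \<le> S q a"
    using up[OF one_ne, of a] sn_nonneg[OF cvsA snq, of "act 1 a"] nH_nonneg[of 1]
    by (smt (verit) divide_nonneg_nonneg)
  show "q (act k a) \<le> nH k * S q a"
  proof (cases "k = 0")
    case True
    then show ?thesis using sn_zero[OF cvsA snq] by (simp add: act_zero1 nH_zero)
  next
    case False
    then have "0 < nH k" using nH_pos by blast
    then show ?thesis using up[OF False, of a] by (simp add: divide_le_eq mult.commute)
  qed
qed

lemma S_ge:
  assumes q: "cont_sn smA P q"
  shows "q a \<le> nH 1 * S q a"
  using S_props(2)[OF q, of 1 a] by (simp add: act_one)

lemma S_seminorm:
  assumes q: "cont_sn smA P q"
  shows "seminorm_on smA (S q)"
proof -
  have snq: "seminorm_on smA q" using q unfolding cont_sn_def by blast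
  have up: "q (act k a) / nH k \<le> S q a" if "k \<noteq> 0" for k a
    using S_props(2)[OF q, of k a] nH_pos[OF that] by (simp add: divide_le_eq mult.commute)
  have ne: "((\<lambda>k. q (act k a) / nH k) ` {k. k \<noteq> 0}) \<noteq> {}" for a using one_ne by blast
  have tri: "S q (x + y) \<le> S q x + S q y" for x y
    unfolding S_def[of q "x+y"]
  proof (rule cSup_least[OF ne], clarify)
    fix k :: 'h assume k: "k \<noteq> 0"
    have "q (act k (x + y)) \<le> q (act k x) + q (act k y)" by (simp add: act_add2 sn_tri[OF cvsA snq])
    then have "q (act k (x + y)) / nH k \<le> q (act k x) / nH k + q (act k y) / nH k"
      using nH_pos[OF k] by (simp add: add_divide_distrib[symmetric] divide_right_mono)
    also have "\<dots> \<le> S q x + S q y" using up[OF k] by (intro add_mono)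
    finally show "q (act k (x + y)) / nH k \<le> S q x + S q y" .
  qed
  have le: "S q (smA c x) \<le> cmod c * S q x" for c x
    unfolding S_def[of q "smA c x"]
  proof (rule cSup_least[OF ne], clarify)
    fix k :: 'h assume k: "k \<noteq> 0"
    have "q (act k (smA c x)) / nH k = cmod c * (q (act k x) / nH k)"
      by (simp add: act_sm2 sn_hom[OF cvsA snq])
    also have "\<dots> \<le> cmod c * S q x" using up[OF k] by (intro mult_left_mono) auto
    finally show "q (act k (smA c x)) / nH k \<le> cmod c * S q x" .
  qed
  have hom: "S q (smA c x) = cmod c * S q x" for c x
  proof (cases "c = 0")
    case True
    then show ?thesis using le[of c x] S_props(3)[OF q, of "smA c x"] by simp
  next
    case False
    have "S q x = S q (smA (inverse c) (smA c x))" using False by (simp add: cvs_mult[OF cvsA, symmetric] cvs_one[OF cvsA])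
    also have "\<dots> \<le> cmod (inverse c) * S q (smA c x)" by (rule le)
    finally have "S q x \<le> cmod (inverse c) * S q (smA c x)" .
    then have "cmod c * S q x \<le> cmod c * (cmod (inverse c) * S q (smA c x))"
      by (intro mult_left_mono) auto
    also have "\<dots> = S q (smA c x)" using False by (simp add: norm_inverse)
    finally have "cmod c * S q x \<le> S q (smA c x)" .
    then show ?thesis using le[of c x] by linarith
  qed
  show ?thesis unfolding seminorm_on_def using tri hom by blast
qed

lemma S_stable:
  assumes q: "cont_sn smA P q"
  shows "\<exists>C\<ge>0. \<forall>h a. S q (act h a) \<le> C * nH h * S q a"
proof -
  obtain C where C: "C \<ge> 0" "\<And>x y. nH (x * y) \<le> C * nH x * nH y" using nH_mult by blast
  have ne: "((\<lambda>k. q (act k a) / nH k) ` {k. k \<noteq> 0}) \<noteq> {}" for a using one_ne by blast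
  have "S q (act h a) \<le> C * nH h * S q a" for h a
    unfolding S_def[of q "act h a"]
  proof (rule cSup_least[OF ne], clarify)
    fix k :: 'h assume k: "k \<noteq> 0"
    have "q (act k (act h a)) = q (act (k * h) a)" by (simp add: act_mult)
    also have "\<dots> \<le> nH (k * h) * S q a" by (rule S_props(2)[OF q])
    also have "\<dots> \<le> (C * nH k * nH h) * S q a" using C(2) S_props(3)[OF q] by (intro mult_right_mono) auto
    finally have "q (act k (act h a)) / nH k \<le> (C * nH k * nH h) * S q a / nH k"
      using nH_pos[OF k] by (intro divide_right_mono) auto
    also have "\<dots> = C * nH h * S q a" using nH_pos[OF k] by simp
    finally show "q (act k (act h a)) / nH k \<le> C * nH h * S q a" .
  qed
  then show ?thesis using C by blast
qed


lemma S_key: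
  assumes q: "cont_sn smA P q" and qm: "\<And>a b. q (a * b) \<le> q a * q b"
    and Cd: "\<And>h. \<exists>r. ptensor_rep nH r \<and> teq smH nH r (\<Delta> h) \<and>
        (\<Sum>i. nH (fst (r i)) * nH (snd (r i))) \<le> Cd * nH h"
  shows "q (act k (a * b)) \<le> Cd * nH k * (S q a * S q b)"
proof -
  have snq: "seminorm_on smA q" using q unfolding cont_sn_def by blast
  define v where "v = act k (a * b)"
  obtain f where fadd: "\<And>x y. f (x + y) = f x + f y" and fsc: "\<And>c x. f (smA c x) = c * f x"
    and fb: "\<And>x. cmod (f x) \<le> q x" and fv: "f v = of_real (q v)"
    using hahn_banach_c[OF cvsA snq, of v] by blast
  have f0: "f 0 = 0" using fadd[of 0 0] by simp
  have fdiff: "f (x - y) = f x - f y" for x y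
    using fadd[of "x - y" y] by (simp add: algebra_simps)
  have fsum: "f (\<Sum>i<n. u i) = (\<Sum>i<n. f (u i))" for n and u :: "nat \<Rightarrow> 'a"
    by (induction n) (simp_all add: f0 fadd)
  define K where "K = S q a * S q b"
  have Knn: "K \<ge> 0" unfolding K_def using S_props(3)[OF q] by simp
  define \<phi> where "\<phi> x y = f (act x a * act y b)" for x y
  have \<phi>b: "cmod (\<phi> x y) \<le> K * nH x * nH y" for x y
  proof -
    have "cmod (\<phi> x y) \<le> q (act x a * act y b)" unfolding \<phi>_def by (rule fb)
    also have "\<dots> \<le> q (act x a) * q (act y b)" by (rule qm)
    also have "\<dots> \<le> (nH x * S q a) * (nH y * S q b)"
      using S_props(2)[OF q] S_props(3)[OF q] sn_nonneg[OF cvsA snq] nH_nonneg by (intro mult_mono) auto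
    also have "\<dots> = K * nH x * nH y" unfolding K_def by (simp add: algebra_simps)
    finally show ?thesis .
  qed
  have bbf: "bounded_bilinear_form smH nH \<phi>" unfolding bounded_bilinear_form_def
  proof (intro conjI allI)
    fix x x' y show "\<phi> (x + x') y = \<phi> x y + \<phi> x' y"
      unfolding \<phi>_def by (simp add: act_add1 distrib_right fadd)
  next
    fix x y y' show "\<phi> x (y + y') = \<phi> x y + \<phi> x y'"
      unfolding \<phi>_def by (simp add: act_add1 distrib_left fadd)
  next
    fix c x y show "\<phi> (smH c x) y = c * \<phi> x y"
      unfolding \<phi>_def by (simp add: act_sm1 smA_mult1[symmetric] fsc)
  next
    fix c x y show "\<phi> x (smH c y) = c * \<phi> x y"
      unfolding \<phi>_def by (simp add: act_sm1 smA_mult2[symmetric] fsc)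
  next
    show "\<exists>K. \<forall>x y. cmod (\<phi> x y) \<le> K * nH x * nH y" using \<phi>b by blast
  qed
  define u where "u i = act (fst (\<Delta> k i)) a * act (snd (\<Delta> k i)) b" for i
  have lim: "(\<lambda>n. q ((\<Sum>i<n. u i) - v)) \<longlonglongrightarrow> 0"
    unfolding u_def v_def by (rule lc_sums_sn[OF cvsA PS q act_sums])
  have "(\<lambda>n. (\<Sum>i<n. f (u i)) - f v) \<longlonglongrightarrow> 0"
  proof (rule Lim_null_comparison[OF _ lim])
    show "\<forall>\<^sub>F n in sequentially. norm ((\<Sum>i<n. f (u i)) - f v) \<le> q ((\<Sum>i<n. u i) - v)"
    proof (intro always_eventually allI)
      fix n
      have "(\<Sum>i<n. f (u i)) - f v = f ((\<Sum>i<n. u i) - v)" by (simp add: fdiff fsum)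
      then show "norm ((\<Sum>i<n. f (u i)) - f v) \<le> q ((\<Sum>i<n. u i) - v)" using fb by simp
    qed
  qed
  then have "(\<lambda>i. f (u i)) sums f v" unfolding sums_def by (rule LIM_zero_cancel)
  then have t1: "tpair \<phi> (\<Delta> k) = f v"
    unfolding tpair_def \<phi>_def u_def by (simp add: sums_unique[symmetric])
  obtain r where r: "ptensor_rep nH r" "teq smH nH r (\<Delta> k)"
    and rb: "(\<Sum>i. nH (fst (r i)) * nH (snd (r i))) \<le> Cd * nH k" using Cd by blast
  have t2: "tpair \<phi> r = f v" using r(2) bbf t1 unfolding teq_def by simp
  have sumr: "summable (\<lambda>i. nH (fst (r i)) * nH (snd (r i)))" using r(1) unfolding ptensor_rep_def .
  have sumK: "summable (\<lambda>i. K * (nH (fst (r i)) * nH (snd (r i))))" by (rule summable_mult[OF sumr])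
  have nb: "norm (\<phi> (fst (r i)) (snd (r i))) \<le> K * (nH (fst (r i)) * nH (snd (r i)))" for i
    using \<phi>b by (simp add: mult.assoc)
  have sumn: "summable (\<lambda>i. norm (\<phi> (fst (r i)) (snd (r i))))"
    by (rule summable_comparison_test'[OF sumK]) (simp add: nb)
  have "q v = cmod (f v)" using fv sn_nonneg[OF cvsA snq, of v] by simp
  also have "\<dots> = norm (\<Sum>i. \<phi> (fst (r i)) (snd (r i)))" using t2 unfolding tpair_def by simp
  also have "\<dots> \<le> (\<Sum>i. norm (\<phi> (fst (r i)) (snd (r i))))" by (rule summable_norm[OF sumn])
  also have "\<dots> \<le> (\<Sum>i. K * (nH (fst (r i)) * nH (snd (r i))))" by (rule suminf_le[OF nb sumn sumK])
  also have "\<dots> = K * (\<Sum>i. nH (fst (r i)) * nH (snd (r i)))" by (rule suminf_mult[OF sumr])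
  also have "\<dots> \<le> K * (Cd * nH k)" by (rule mult_left_mono[OF rb Knn])
  finally show ?thesis unfolding v_def K_def by (simp add: algebra_simps)
qed

end


theorem proposition5p11:
  fixes smH :: "complex \<Rightarrow> 'h::ring_1 \<Rightarrow> 'h" and nH :: "'h \<Rightarrow> real"
    and \<Delta> :: "'h \<Rightarrow> nat \<Rightarrow> 'h \<times> 'h" and \<epsilon> :: "'h \<Rightarrow> complex"
    and smA :: "complex \<Rightarrow> 'a::ring_1 \<Rightarrow> 'a" and P :: "('a \<Rightarrow> real) set"
    and act :: "'h \<Rightarrow> 'a \<Rightarrow> 'a"
  assumes "banach_bialgebra smH nH \<Delta> \<epsilon>"
    and "am_algebra smA P"
    and "module_algebra smH nH \<Delta> \<epsilon> smA P act"
  shows "\<exists>Q. defining_family smA P Q \<and>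
           (\<forall>q\<in>Q. (\<forall>a b. q (a * b) \<le> q a * q b) \<and>
                  (\<exists>p. cont_sn smH {nH} p \<and> (\<forall>h a. q (act h a) \<le> p h * q a)))"
proof -
  interpret ctx smH nH \<Delta> \<epsilon> smA P act using assms by unfold_locales
  obtain Q0 where Q0: "defining_family smA P Q0" and Q0m: "\<And>q a b. q \<in> Q0 \<Longrightarrow> q (a * b) \<le> q a * q b"
    using assms(2) unfolding am_algebra_def by blast
  have Q0c: "\<And>q. q \<in> Q0 \<Longrightarrow> cont_sn smA P q" using Q0 unfolding defining_family_def by blast
  have Q0s: "\<forall>q\<in>Q0. seminorm_on smA q" using Q0c unfolding cont_sn_def by blast
  obtain Cd where Cd: "\<And>h. \<exists>r. ptensor_rep nH r \<and> teq smH nH r (\<Delta> h) \<and>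
        (\<Sum>i. nH (fst (r i)) * nH (snd (r i))) \<le> Cd * nH h" using Cd_ex by blast
  define D where "D = max Cd 1"
  have D: "D \<ge> 1" "Cd \<le> D" unfolding D_def by auto
  define N where "N q a = D * S q a" for q a
  define Q where "Q = N ` Q0"
  have Nsn: "seminorm_on smA (N q)" if "q \<in> Q0" for q
  proof -
    have s: "seminorm_on smA (S q)" by (rule S_seminorm[OF Q0c[OF that]])
    have "D * S q (x + y) \<le> D * S q x + D * S q y" for x y
      using mult_left_mono[OF sn_tri[OF cvsA s, of x y], of D] D by (simp add: distrib_left)
    moreover have "D * S q (smA c x) = cmod c * (D * S q x)" for c x
      using sn_hom[OF cvsA s] by simp
    ultimately show ?thesis unfolding N_def seminorm_on_def by blast
  qed
  have Ncont: "cont_sn smA P (N q)" if q: "q \<in> Q0" for q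
  proof -
    obtain K s where K: "K \<ge> 0" "cont_sn smA P s" "\<And>a. S q a \<le> K * s a"
      using S_props(1)[OF Q0c[OF q]] by blast
    show ?thesis
    proof (rule cont_sn_dom[OF cvsA PS K(2) Nsn[OF q]])
      show "D * K \<ge> 0" using K D by simp
      fix x show "N q x \<le> D * K * s x" unfolding N_def using K(3)[of x] D
        by (simp add: mult.assoc mult_left_mono)
    qed
  qed
  have Nge: "q x \<le> (nH 1 / D) * N q x" if "q \<in> Q0" for q x
    using S_ge[OF Q0c[OF that], of x] D unfolding N_def by simp
  have NQ: "\<forall>q\<in>Q0. \<forall>x. 0 \<le> N q x"
    using Nsn sn_nonneg[OF cvsA] by blast
  have def: "defining_family smA P Q" unfolding defining_family_def
  proof (intro conjI ballI)
    fix M assume "M \<in> Q" then show "cont_sn smA P M" unfolding Q_def using Ncont by blast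
  next
    fix p assume p: "p \<in> P"
    have pc: "cont_sn smA Q0 p" using Q0 p unfolding defining_family_def by blast
    obtain F C where F: "finite F" "F \<subseteq> Q0" "C \<ge> 0" and b: "\<And>x. p x \<le> C * (\<Sum>q\<in>F. q x)"
      using cont_sn_nn[OF cvsA Q0s pc] by blast
    have "p x \<le> (C * real (card F) * (nH 1 / D)) * (\<Sum>M\<in>N ` F. M x)" for x
    proof -
      have "(\<Sum>q\<in>F. q x) \<le> (\<Sum>q\<in>F. (nH 1 / D) * (\<Sum>M\<in>N ` F. M x))"
      proof (rule sum_mono)
        fix q assume q: "q \<in> F"
        have "N q x \<le> (\<Sum>M\<in>N ` F. M x)"
          using F q NQ by (intro member_le_sum[where f="\<lambda>M. M x"]) auto
        then have "(nH 1 / D) * N q x \<le> (nH 1 / D) * (\<Sum>M\<in>N ` F. M x)"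
          using D nH_nonneg[of 1] by (intro mult_left_mono) auto
        then show "q x \<le> (nH 1 / D) * (\<Sum>M\<in>N ` F. M x)" using Nge[of q x] q F by force
      qed
      also have "\<dots> = real (card F) * (nH 1 / D) * (\<Sum>M\<in>N ` F. M x)" by simp
      finally show ?thesis using b[of x] mult_left_mono[OF _ F(3)] by (smt (verit) mult.assoc)
    qed
    moreover have "finite (N ` F)" "N ` F \<subseteq> Q" using F unfolding Q_def by auto
    ultimately show "cont_sn smA Q p" unfolding cont_sn_def using PS p by blast
  qed
  have props: "(\<forall>a b. M (a * b) \<le> M a * M b) \<and>
                  (\<exists>p. cont_sn smH {nH} p \<and> (\<forall>h a. M (act h a) \<le> p h * M a))" if MQ: "M \<in> Q" for M
  proof -
    obtain q where q: "q \<in> Q0" and M: "M = N q" using MQ unfolding Q_def by blast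
    have qc: "cont_sn smA P q" by (rule Q0c[OF q])
    have mult: "M (a * b) \<le> M a * M b" for a b
    proof -
      have ne: "((\<lambda>k. q (act k (a*b)) / nH k) ` {k. k \<noteq> 0}) \<noteq> {}" using one_ne by blast
      have "S q (a * b) \<le> Cd * (S q a * S q b)" unfolding S_def[of q "a*b"]
      proof (rule cSup_least[OF ne], clarify)
        fix k :: 'h assume k: "k \<noteq> 0"
        have "q (act k (a * b)) \<le> Cd * nH k * (S q a * S q b)"
          by (rule S_key[OF qc Q0m[OF q] Cd])
        then show "q (act k (a * b)) / nH k \<le> Cd * (S q a * S q b)"
          using nH_pos[OF k] by (simp add: divide_le_eq algebra_simps)
      qed
      also have "\<dots> \<le> D * (S q a * S q b)"
        using D S_props(3)[OF qc] by (intro mult_right_mono) auto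
      finally have "D * S q (a * b) \<le> D * (D * (S q a * S q b))" using D by (intro mult_left_mono) auto
      then show ?thesis unfolding M N_def by (simp add: algebra_simps)
    qed
    obtain C where C: "C \<ge> 0" "\<And>h a. S q (act h a) \<le> C * nH h * S q a"
      using S_stable[OF qc] by blast
    have pc: "cont_sn smH {nH} (\<lambda>h. C * nH h)" unfolding cont_sn_def
    proof (intro conjI exI[of _ "{nH}"] exI[of _ C] allI)
      have "C * nH (x + y) \<le> C * nH x + C * nH y" for x y
        using mult_left_mono[OF sn_tri[OF cvsH snH, of x y] C(1)] by (simp add: distrib_left)
      moreover have "C * nH (smH c x) = cmod c * (C * nH x)" for c x
        using sn_hom[OF cvsH snH] by simp
      ultimately show "seminorm_on smH (\<lambda>h. C * nH h)" unfolding seminorm_on_def by blast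
    qed auto
    have "M (act h a) \<le> C * nH h * M a" for h a
      using C(2)[of h a] D unfolding M N_def by (simp add: mult_left_mono mult.left_commute)
    then show ?thesis using mult pc by blast
  qed
  show ?thesis using def props by blast
qed

end
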